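(* The function $\mu_{\mathcal{S}_\varepsilon}$, defined on Borel subsets $E\subset\mathcal{S}_\varepsilon$ by $$\mu_{\mathcal{S}_\varepsilon}(E)=\sup_{\tau>0}\frac{1}{\tau^{k+r-1}}m_{\mathcal{X}_d}(E^{I_\tau}),$$ is a measure on $\mathcal{S}_\varepsilon$.
   Context: Let $k,r\ge1$, $m_1,\dots,m_k,n_1,\dots,n_r$ positive integers, $m=\sum m_i$, $n=\sum n_j$, $d=m+n$, with fixed norms $\|\cdot\|$ on each $\mathbb{R}^{m_i}$, $\mathbb{R}^{n_j}$, and $\mathbb{S}^l$ the unit sphere of the norm on $\mathbb{R}^l$. $\mathcal{X}_d=SL_d(\mathbb{R})/SL_d(\mathbb{Z})$ is the space of unimodular lattices in $\mathbb{R}^d$ with invariant probability measure $m_{\mathcal{X}_d}$. For $\varepsilon>0$, $L_\varepsilon=\{(x,y)\in(\mathbb{S}^{m_1}\times\cdots\times\mathbb{S}^{m_k}\times\mathbb{S}^{n_1}\times\cdots\times\mathbb{S}^{n_{r-1}})\times\mathbb{R}^{n_r}:\|y\|^{n_r}\le\varepsilon\}\subset\mathbb{R}^d$, and $\mathcal{S}_\varepsilon$ is the set of $\Lambda\in\mathcal{X}_d$ having at least one primitive vector in $L_\varepsilon$. For $t\in\mathbb{R}^{k+r-1}$, $a_t=\mathrm{diag}\big(e^{t_1}I_{m_1},\dots,e^{t_k}I_{m_k},e^{-t_{k+1}}I_{n_1},\dots,e^{-t_{k+r-1}}I_{n_{r-1}},e^{(n_1t_{k+1}+\cdots+n_{r-1}t_{k+r-1}-m_1t_1-\cdots-m_kt_k)/n_r}I_{n_r}\big)$.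 For $I\subset\mathbb{R}^{k+r-1}$, $E^I=\{a_tx:t\in I,x\in E\}$, and $I_\tau=[0,\tau]^{k+r-1}$. *)

theory Defs
  imports "HOL-Analysis.Analysis"
begin

text \<open>Coordinates of R^d are indexed by a finite type 'n (d = CARD('n)).
  The block structure R^d = R^{m_1} x ... x R^{m_k} x R^{n_1} x ... x R^{n_r}
  is given by a map blk :: 'n => nat with values in {0..<k+r}; blocks 0..k-1
  are the m_i-blocks, blocks k..k+r-1 are the n_j-blocks (block k+r-1 is n_r).\<close>

definition block :: "('n \<Rightarrow> nat) \<Rightarrow> nat \<Rightarrow> 'n set" where
  "block blk i = {j. blk j = i}"

definition bsize :: "('n::finite \<Rightarrow> nat) \<Rightarrow> nat \<Rightarrow> nat" where
  "bsize blk i = card (block blk i)"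

definition is_block_norm :: "('n::finite \<Rightarrow> nat) \<Rightarrow> nat \<Rightarrow> (real^'n \<Rightarrow> real) \<Rightarrow> bool" where
  "is_block_norm blk i N \<longleftrightarrow>
     (\<forall>v w. (\<forall>j\<in>block blk i. v$j = w$j) \<longrightarrow> N v = N w) \<and>
     (\<forall>c v. N (c *\<^sub>R v) = \<bar>c\<bar> * N v) \<and>
     (\<forall>v w. N (v + w) \<le> N v + N w) \<and>
     (\<forall>v. N v = 0 \<longleftrightarrow> (\<forall>j\<in>block blk i. v$j = 0))"

definition Zvecs :: "(real^'n::finite) set" where
  "Zvecs = {z. \<forall>i. z$i \<in> \<int>}"

definition SLd :: "(real^'n^'n::finite) set" where
  "SLd = {g. det g = 1}"

definition lat :: "real^'n^'n::finite \<Rightarrow> (real^'n) set" where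
  "lat g = (\<lambda>z. g *v z) ` Zvecs"

definition Xd :: "(real^'n::finite) set set" where
  "Xd = lat ` SLd"

text \<open>Borel structure of X_d = SL_d(R)/SL_d(Z): quotient Borel sets.\<close>
definition Xd_sets :: "(real^'n::finite) set set set" where
  "Xd_sets = {E. E \<subseteq> Xd \<and> {g \<in> SLd. lat g \<in> E} \<in> sets borel}"

definition lat_act :: "real^'n^'n::finite \<Rightarrow> (real^'n) set \<Rightarrow> (real^'n) set" where
  "lat_act g \<Lambda> = (\<lambda>v. g *v v) ` \<Lambda>"

definition primitive :: "(real^'n::finite) set \<Rightarrow> real^'n \<Rightarrow> bool" where
  "primitive \<Lambda> v \<longleftrightarrow> v \<in> \<Lambda> \<and> v \<noteq> 0 \<and> (\<forall>c. c *\<^sub>R v \<in> \<Lambda> \<longrightarrow> c \<in> \<int>)"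

definition L_eps :: "('n::finite \<Rightarrow> nat) \<Rightarrow> nat \<Rightarrow> nat \<Rightarrow> (nat \<Rightarrow> real^'n \<Rightarrow> real)
    \<Rightarrow> real \<Rightarrow> (real^'n) set" where
  "L_eps blk k r N \<epsilon> = {v. (\<forall>i<k+r-1. N i v = 1) \<and>
      N (k+r-1) v ^ bsize blk (k+r-1) \<le> \<epsilon>}"

definition S_eps :: "('n::finite \<Rightarrow> nat) \<Rightarrow> nat \<Rightarrow> nat \<Rightarrow> (nat \<Rightarrow> real^'n \<Rightarrow> real)
    \<Rightarrow> real \<Rightarrow> (real^'n) set set" where
  "S_eps blk k r N \<epsilon> = {\<Lambda> \<in> Xd. \<exists>v. primitive \<Lambda> v \<and> v \<in> L_eps blk k r N \<epsilon>}"

text \<open>Exponent of a_t on block i; t :: nat => real, only t 0, ..., t (k+r-2) matter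
  (t i here is t_{i+1} of the paper).\<close>
definition expo :: "('n::finite \<Rightarrow> nat) \<Rightarrow> nat \<Rightarrow> nat \<Rightarrow> (nat \<Rightarrow> real) \<Rightarrow> nat \<Rightarrow> real" where
  "expo blk k r t i =
     (if i < k then t i
      else if i < k + r - 1 then - t i
      else ((\<Sum>j\<in>{k..<k+r-1}. real (bsize blk j) * t j)
            - (\<Sum>j<k. real (bsize blk j) * t j)) / real (bsize blk (k+r-1)))"

definition a_mat :: "('n::finite \<Rightarrow> nat) \<Rightarrow> nat \<Rightarrow> nat \<Rightarrow> (nat \<Rightarrow> real) \<Rightarrow> real^'n^'n" where
  "a_mat blk k r t = (\<chi> i j. if i = j then exp (expo blk k r t (blk i)) else 0)"

definition orbit_set :: "('n::finite \<Rightarrow> nat) \<Rightarrow> nat \<Rightarrow> nat \<Rightarrow> (nat \<Rightarrow> real) set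
    \<Rightarrow> (real^'n) set set \<Rightarrow> (real^'n) set set" where
  "orbit_set blk k r I E = {lat_act (a_mat blk k r t) \<Lambda> | t \<Lambda>. t \<in> I \<and> \<Lambda> \<in> E}"

definition Icube :: "nat \<Rightarrow> nat \<Rightarrow> real \<Rightarrow> (nat \<Rightarrow> real) set" where
  "Icube k r \<tau> = {t. \<forall>i<k+r-1. 0 \<le> t i \<and> t i \<le> \<tau>}"

definition mu_S :: "(real^'n::finite) set measure \<Rightarrow> ('n \<Rightarrow> nat) \<Rightarrow> nat \<Rightarrow> nat
    \<Rightarrow> (real^'n) set set \<Rightarrow> ennreal" where
  "mu_S m blk k r E = (SUP \<tau>\<in>{0<..}. ennreal (1 / \<tau> ^ (k+r-1)) *
       emeasure m (orbit_set blk k r (Icube k r \<tau>) E))"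

end

theory Submission
  imports Defs
begin
lemma expo_add: "expo blk k r (\<lambda>i. s i + t i) i = expo blk k r s i + expo blk k r t i"
  by (simp add: expo_def sum.distrib algebra_simps add_divide_distrib diff_divide_distrib)

lemma expo_neg: "expo blk k r (\<lambda>i. - t i) i = - expo blk k r t i"
  by (simp add: expo_def sum_negf algebra_simps minus_divide_left)

lemma expo_cong: assumes "r \<ge> 1" "\<forall>j<k+r-1. s j = t j" shows "expo blk k r s i = expo blk k r t i"
proof -
  have a: "(\<Sum>j\<in>{k..<k+r-1}. real (bsize blk j) * s j) = (\<Sum>j\<in>{k..<k+r-1}. real (bsize blk j) * t j)"
    using assms by (intro sum.cong) auto
  have b: "(\<Sum>j<k. real (bsize blk j) * s j) = (\<Sum>j<k. real (bsize blk j) * t j)"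
    using assms by (intro sum.cong) auto
  show ?thesis using assms unfolding expo_def a b by auto
qed

lemma a_mat_mult: "a_mat blk k r s ** a_mat blk k r t = a_mat blk k r (\<lambda>i. s i + t i)"
  by (simp add: a_mat_def matrix_matrix_mult_def vec_eq_iff if_distrib[of "\<lambda>x. x * _"] expo_add exp_add cong: if_cong)

lemma a_mat_zero: "a_mat blk k r (\<lambda>_. 0) = mat 1"
  by (simp add: a_mat_def expo_def mat_def vec_eq_iff)

lemma a_mat_mv: "a_mat blk k r t *v v = (\<chi> j. exp (expo blk k r t (blk j)) * v$j)"
  by (simp add: a_mat_def matrix_vector_mult_def vec_eq_iff if_distrib[of "\<lambda>x. x * _"] cong: if_cong)
lemma sum_blocks: assumes "\<forall>j. blk j < K"
  shows "(\<Sum>j\<in>UNIV. f (blk j)) = (\<Sum>i<K. real (bsize blk i) * f i)"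
proof -
  have "(\<Sum>j\<in>UNIV. f (blk j)) = (\<Sum>i<K. \<Sum>j\<in>{x\<in>UNIV. blk x = i}. f (blk j))"
    using assms by (intro sum.group[symmetric]) auto
  also have "\<dots> = (\<Sum>i<K. real (bsize blk i) * f i)"
    by (intro sum.cong) (auto simp: bsize_def block_def)
  finally show ?thesis .
qed

lemma expo_total: assumes "r \<ge> 1" "bsize blk (k+r-1) \<noteq> 0"
  shows "(\<Sum>i<k+r. real (bsize blk i) * expo blk k r t i) = 0"
proof -
  have U: "{..<k+r} = {..<k} \<union> {k..<k+r-1} \<union> {k+r-1}" using assms by auto
  have "(\<Sum>i<k+r. real (bsize blk i) * expo blk k r t i) =
     (\<Sum>i<k. real (bsize blk i) * expo blk k r t i) + (\<Sum>i\<in>{k..<k+r-1}. real (bsize blk i) * expo blk k r t i)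
     + real (bsize blk (k+r-1)) * expo blk k r t (k+r-1)"
    unfolding U using assms(1) by (subst sum.union_disjoint; auto intro!: sum.union_disjoint)
  also have "(\<Sum>i<k. real (bsize blk i) * expo blk k r t i) = (\<Sum>i<k. real (bsize blk i) * t i)"
    by (intro sum.cong) (auto simp: expo_def)
  also have "(\<Sum>i\<in>{k..<k+r-1}. real (bsize blk i) * expo blk k r t i) = - (\<Sum>i\<in>{k..<k+r-1}. real (bsize blk i) * t i)"
    by (subst sum_negf[symmetric], intro sum.cong) (auto simp: expo_def)
  also have "real (bsize blk (k+r-1)) * expo blk k r t (k+r-1) = (\<Sum>i\<in>{k..<k+r-1}. real (bsize blk i) * t i) - (\<Sum>i<k. real (bsize blk i) * t i)"
    using assms by (simp add: expo_def)
  finally show ?thesis by simp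
qed

lemma det_a_mat: assumes "r \<ge> 1" "bsize blk (k+r-1) \<noteq> 0" "\<forall>j. blk j < k + r"
  shows "det (a_mat blk k r t) = 1"
proof -
  have "det (a_mat blk k r t) = (\<Prod>i\<in>UNIV. exp (expo blk k r t (blk i)))"
    by (subst det_diagonal) (auto simp: a_mat_def)
  also have "\<dots> = exp (\<Sum>i\<in>UNIV. expo blk k r t (blk i))" by (simp add: exp_sum)
  also have "(\<Sum>i\<in>UNIV. expo blk k r t (blk i)) = 0"
    using sum_blocks[OF assms(3)] expo_total[OF assms(1,2)] by simp
  finally show ?thesis by simp
qed
context fixes N :: "real^'n::finite \<Rightarrow> real" and blk i
  assumes bn: "is_block_norm blk i N"
begin

lemma bn_hom: "N (c *\<^sub>R v) = \<bar>c\<bar> * N v" using bn by (simp add: is_block_norm_def)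
lemma bn_tri: "N (v + w) \<le> N v + N w" using bn by (simp add: is_block_norm_def)
lemma bn_zero: "N v = 0 \<longleftrightarrow> (\<forall>j\<in>block blk i. v$j = 0)" using bn by (simp add: is_block_norm_def)
lemma bn_local: "(\<forall>j\<in>block blk i. v$j = w$j) \<Longrightarrow> N v = N w" using bn by (simp add: is_block_norm_def)

lemma bn_neg: "N (- v) = N v" using bn_hom[of "-1" v] by simp
lemma bn_0: "N 0 = 0" using bn_hom[of 0 0] by simp
lemma bn_nonneg: "N v \<ge> 0" using bn_tri[of v "-v"] bn_neg[of v] bn_0 by simp
lemma bn_diff: "\<bar>N v - N w\<bar> \<le> N (v - w)"
  using bn_tri[of "v - w" w] bn_tri[of "w - v" v] bn_neg[of "v - w"] by (auto simp: abs_le_iff)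

lemma bn_sum: "finite S \<Longrightarrow> N (\<Sum>j\<in>S. f j) \<le> (\<Sum>j\<in>S. N (f j))"
proof (induction S rule: finite_induct)
  case empty then show ?case by (simp add: bn_0)
next
  case (insert x F) then show ?case using bn_tri[of "f x" "sum f F"] by simp
qed

lemma bn_bound: "N v \<le> (\<Sum>j\<in>UNIV. N (axis j 1)) * norm v"
proof -
  have "N v = N (\<Sum>j\<in>UNIV. (v$j) *\<^sub>R axis j 1)"
    using basis_expansion[of v] by (simp add: scalar_mult_eq_scaleR)
  also have "\<dots> \<le> (\<Sum>j\<in>UNIV. N ((v$j) *\<^sub>R axis j (1::real)))" by (rule bn_sum) simp
  also have "\<dots> = (\<Sum>j\<in>UNIV. \<bar>v$j\<bar> * N (axis j 1))" by (simp add: bn_hom)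
  also have "\<dots> \<le> (\<Sum>j\<in>UNIV. norm v * N (axis j 1))"
    by (intro sum_mono mult_right_mono component_le_norm_cart bn_nonneg)
  finally show ?thesis by (simp add: sum_distrib_left mult.commute)
qed

lemma bn_lipschitz: "lipschitz_on (\<Sum>j\<in>UNIV. N (axis j 1)) UNIV N"
  unfolding lipschitz_on_def
proof (intro conjI ballI)
  show "0 \<le> (\<Sum>j\<in>UNIV. N (axis j 1))" by (intro sum_nonneg bn_nonneg)
  fix x y :: "real^'n" assume "x \<in> UNIV" "y \<in> UNIV"
  have "dist (N x) (N y) \<le> N (x - y)" using bn_diff[of x y] by (simp add: dist_real_def)
  also have "\<dots> \<le> (\<Sum>j\<in>UNIV. N (axis j 1)) * dist x y" using bn_bound[of "x - y"] by (simp add: dist_norm)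
  finally show "dist (N x) (N y) \<le> (\<Sum>j\<in>UNIV. N (axis j 1)) * dist x y" .
qed

lemma bn_cont: "continuous_on UNIV N"
  by (rule lipschitz_on_continuous_on[OF bn_lipschitz])

lemma bn_meas: "N \<in> borel_measurable borel"
  by (rule borel_measurable_continuous_onI[OF bn_cont])

lemma bn_lower: assumes ne: "block blk i \<noteq> {}"
  shows "\<exists>c>0. \<forall>v. \<forall>l\<in>block blk i. c * \<bar>v$l\<bar> \<le> N v"
proof -
  define K where "K = {v::real^'n. (\<forall>l. l \<notin> block blk i \<longrightarrow> v$l = 0) \<and> norm v = 1}"
  have "closed K" unfolding K_def
    by (intro closed_Collect_conj closed_Collect_all closed_Collect_imp closed_Collect_eq)
       (auto intro!: continuous_intros)
  moreover have "bounded K" unfolding K_def by (auto simp: bounded_iff)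
  ultimately have cK: "compact K" by (simp add: compact_eq_bounded_closed)
  obtain l0 where l0: "l0 \<in> block blk i" using ne by auto
  have "axis l0 (1::real) \<in> K" using l0 norm_axis_1[of l0] unfolding K_def by (auto simp del: norm_axis_1 simp: axis_def)
  then have "K \<noteq> {}" by auto
  from continuous_attains_inf[OF cK this continuous_on_subset[OF bn_cont]]
  obtain v0 where v0: "v0 \<in> K" "\<And>y. y \<in> K \<Longrightarrow> N v0 \<le> N y" by auto
  have "N v0 \<noteq> 0"
  proof
    assume "N v0 = 0"
    then have "\<forall>j\<in>block blk i. v0$j = 0" using bn_zero by simp
    with v0(1) have "v0 = 0" by (auto simp: K_def vec_eq_iff)
    with v0(1) show False by (simp add: K_def)
  qed
  then have c0: "N v0 > 0" using bn_nonneg[of v0] by simp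
  show ?thesis
  proof (intro exI[of _ "N v0"] conjI allI ballI c0)
    fix v :: "real^'n" and l assume l: "l \<in> block blk i"
    define p where "p = (\<chi> j. if j \<in> block blk i then v$j else 0)"
    have Np: "N p = N v" by (rule bn_local) (simp add: p_def)
    have pl: "p$l = v$l" using l by (simp add: p_def)
    show "N v0 * \<bar>v$l\<bar> \<le> N v"
    proof (cases "p = 0")
      case True then show ?thesis using pl bn_nonneg[of v] by simp
    next
      case False
      then have np: "norm p > 0" by simp
      have "(1 / norm p) *\<^sub>R p \<in> K" using np by (auto simp: K_def p_def)
      then have "N v0 \<le> N ((1 / norm p) *\<^sub>R p)" by (rule v0(2))
      also have "\<dots> = N p / norm p" by (simp add: bn_hom)
      finally have "N v0 * norm p \<le> N p" using np by (simp add: field_simps)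
      moreover have "N v0 * \<bar>v$l\<bar> \<le> N v0 * norm p"
        using component_le_norm_cart[of p l] pl c0 by (intro mult_left_mono) auto
      ultimately show ?thesis using Np by simp
    qed
  qed
qed

end
lemma vec_borel_measurable:
  fixes f :: "'a \<Rightarrow> 'b::euclidean_space^'n::finite"
  assumes "\<And>i. (\<lambda>x. f x $ i) \<in> borel_measurable M"
  shows "f \<in> borel_measurable M"
  by (subst borel_measurable_euclidean_space) (auto simp: Basis_vec_def inner_axis intro!: borel_measurable_inner assms)

lemma vec_nth_measurable[measurable]: "(\<lambda>x::'a::topological_space^'n::finite. x $ i) \<in> borel_measurable borel"
  by (rule borel_measurable_continuous_onI) (intro continuous_intros)

lemma mv_measurable[measurable]: "(\<lambda>g::real^'n::finite^'n. g *v z) \<in> borel_measurable borel"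
  by (intro vec_borel_measurable) (simp add: matrix_vector_mult_def)

lemma Zvecs_countable: "countable (Zvecs :: (real^'n::finite) set)"
proof -
  have "Zvecs \<subseteq> (\<lambda>f::'n \<Rightarrow> int. \<chi> i. of_int (f i)) ` UNIV"
  proof
    fix z :: "real^'n" assume "z \<in> Zvecs"
    then have "\<forall>i. of_int \<lfloor>z$i\<rfloor> = z$i" by (metis (mono_tags) Zvecs_def mem_Collect_eq Ints_cases floor_of_int)
    then have "(\<chi> i. real_of_int \<lfloor>z$i\<rfloor>) = z" by (simp only: vec_lambda_eta)
    then show "z \<in> range (\<lambda>f::'n \<Rightarrow> int. \<chi> i. of_int (f i))"
      by (metis rangeI)
  qed
  then show ?thesis by (rule countable_subset) simp
qed

lemma Zvecs_add: "z \<in> Zvecs \<Longrightarrow> w \<in> Zvecs \<Longrightarrow> z + w \<in> Zvecs" by (auto simp: Zvecs_def)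

lemma lat_act_lat: "lat_act g (lat h) = lat (g ** h)"
  by (auto simp: lat_act_def lat_def image_image matrix_vector_mul_assoc)

lemma lat_act_comp: "lat_act g (lat_act h L) = lat_act (g ** h) L"
  by (auto simp: lat_act_def image_image matrix_vector_mul_assoc)

lemma lat_act_id: "lat_act (mat 1) L = L"
  by (auto simp: lat_act_def)

lemma SLd_mult: "g \<in> SLd \<Longrightarrow> h \<in> SLd \<Longrightarrow> g ** h \<in> SLd"
  by (simp add: SLd_def det_mul)

lemma SLd_inv: assumes "(g::real^'n::finite^'n) \<in> SLd"
  obtains g' where "g' ** g = mat 1" "g ** g' = mat 1"
proof -
  have "invertible g" using assms by (simp add: SLd_def invertible_det_nz)
  then show ?thesis using that by (auto simp: invertible_def)
qed

lemma SLd_inj: "(g::real^'n::finite^'n) \<in> SLd \<Longrightarrow> g *v x = g *v y \<longleftrightarrow> x = y"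
  by (metis SLd_inv matrix_vector_mul_assoc matrix_vector_mul_lid)

lemma primitive_lat_iff: assumes g: "g \<in> SLd" and z: "z \<in> Zvecs"
  shows "primitive (lat g) (g *v z) \<longleftrightarrow> z \<noteq> 0 \<and> (\<forall>c. c *\<^sub>R z \<in> Zvecs \<longrightarrow> c \<in> \<int>)"
proof -
  have "g *v z \<noteq> 0 \<longleftrightarrow> z \<noteq> 0" using SLd_inj[OF g, of z 0] by simp
  moreover have "c *\<^sub>R (g *v z) \<in> lat g \<longleftrightarrow> c *\<^sub>R z \<in> Zvecs" for c
  proof -
    have "c *\<^sub>R (g *v z) = g *v (c *\<^sub>R z)"
      by (simp add: vec_eq_iff matrix_vector_mult_def sum_distrib_left algebra_simps)
    then show ?thesis using SLd_inj[OF g] by (auto simp: lat_def)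
  qed
  moreover have "g *v z \<in> lat g" using z by (auto simp: lat_def)
  ultimately show ?thesis by (auto simp: primitive_def)
qed
lemma det_measurable[measurable]: "(\<lambda>g::real^'n::finite^'n. det g) \<in> borel_measurable borel"
  unfolding det_def by measurable

lemma SLd_borel: "(SLd :: (real^'n::finite^'n) set) \<in> sets borel"
proof -
  have "SLd = {g::real^'n^'n \<in> space borel. det g = 1}" by (simp add: SLd_def)
  also have "\<dots> \<in> sets borel" by measurable
  finally show ?thesis .
qed

lemma a_mult_entry: "(a_mat blk k r s ** g) $ i $ j = exp (expo blk k r s (blk i)) * g $ i $ j"
  by (simp add: a_mat_def matrix_matrix_mult_def if_distrib[of "\<lambda>x. x * _"] cong: if_cong)

locale P56 =
  fixes blk :: "'n::finite \<Rightarrow> nat" and k r :: nat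
    and N :: "nat \<Rightarrow> real^'n \<Rightarrow> real" and \<epsilon> :: real
    and m :: "(real^'n) set measure"
  assumes k1: "k \<ge> 1" and r1: "r \<ge> 1"
    and blk_lt: "\<forall>j. blk j < k + r"
    and blk_ne: "\<forall>i<k+r. block blk i \<noteq> {}"
    and norms: "\<forall>i<k+r. is_block_norm blk i (N i)"
    and eps: "\<epsilon> > 0"
    and sp: "space m = Xd" and sets_m: "sets m = Xd_sets" and prob: "emeasure m (space m) = 1"
    and inv: "\<forall>g\<in>SLd. \<forall>E\<in>sets m. emeasure m (lat_act g ` E) = emeasure m E"
begin

abbreviation "DD \<equiv> k + r - 1"
abbreviation "a t \<equiv> a_mat blk k r t"
abbreviation "S \<equiv> S_eps blk k r N \<epsilon>"
abbreviation "L \<equiv> L_eps blk k r N \<epsilon>"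
abbreviation "orb I E \<equiv> orbit_set blk k r I E"

lemma bn: "i < k + r \<Longrightarrow> is_block_norm blk i (N i)" using norms by auto

lemma bsize_pos: "i < k + r \<Longrightarrow> bsize blk i > 0"
  using blk_ne by (auto simp: bsize_def card_gt_0_iff)

lemma a_SLd: "a t \<in> SLd"
  using det_a_mat[OF r1 _ blk_lt] bsize_pos[of "k+r-1"] r1 by (simp add: SLd_def)

lemma a_inv1: "a t ** a (\<lambda>i. - t i) = mat 1"
  by (simp add: a_mat_mult a_mat_zero[unfolded fun_eq_iff])

lemma a_inv2: "a (\<lambda>i. - t i) ** a t = mat 1"
  by (simp add: a_mat_mult a_mat_zero[unfolded fun_eq_iff])

lemma a_cong: assumes "\<forall>j<DD. s j = t j" shows "a s = a t"
proof -
  have e: "\<And>i. expo blk k r s i = expo blk k r t i" using expo_cong[OF r1] assms by blast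
  show ?thesis unfolding a_mat_def e ..
qed

lemma expo_small: "i < k \<Longrightarrow> expo blk k r t i = t i" "k \<le> i \<Longrightarrow> i < DD \<Longrightarrow> expo blk k r t i = - t i"
  by (auto simp: expo_def)

lemma N_a: assumes "i < k + r" shows "N i (a t *v v) = exp (expo blk k r t i) * N i v"
proof -
  have "N i (a t *v v) = N i (exp (expo blk k r t i) *\<^sub>R v)"
    by (rule bn_local[OF bn[OF assms]]) (auto simp: a_mat_mv block_def)
  then show ?thesis by (simp add: bn_hom[OF bn[OF assms]])
qed

lemma lat_act_a_inv1: "lat_act (a (\<lambda>i. - t i)) (lat_act (a t) X) = X"
  by (simp add: lat_act_comp a_inv2 lat_act_id)

lemma lat_act_a_inv2: "lat_act (a t) (lat_act (a (\<lambda>i. - t i)) X) = X"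
  by (simp add: lat_act_comp a_inv1 lat_act_id)

lemma lat_Xd: "g \<in> SLd \<Longrightarrow> lat g \<in> Xd" by (simp add: Xd_def)

lemma sets_mD: "E \<in> sets m \<Longrightarrow> E \<subseteq> Xd \<and> {g \<in> SLd. lat g \<in> E} \<in> sets borel"
  using sets_m by (simp add: Xd_sets_def)

lemma sets_mI: "E \<subseteq> Xd \<Longrightarrow> {g \<in> SLd. lat g \<in> E} \<in> sets borel \<Longrightarrow> E \<in> sets m"
  using sets_m by (simp add: Xd_sets_def)

definition Tv :: "real^'n \<Rightarrow> nat \<Rightarrow> real" where
  "Tv w = (\<lambda>j. if j < k then ln (N j w) else if j < DD then - ln (N j w) else 0)"

lemma Tv_char: assumes "\<forall>i<DD. N i (a s *v w) = 1"
  shows "(\<forall>i<DD. N i w > 0) \<and> (\<forall>j<DD. Tv w j = - s j)"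
proof -
  have *: "N i w = exp (- expo blk k r s i)" if "i < DD" for i
  proof -
    have "exp (expo blk k r s i) * N i w = 1" using assms that N_a[of i s w] by auto
    then show ?thesis by (simp add: exp_minus field_simps)
  qed
  show ?thesis using * by (auto simp: Tv_def expo_small)
qed

lemma Tv_meas[measurable]: "(\<lambda>g::real^'n^'n. Tv (g *v z) j) \<in> borel_measurable borel"
proof (cases "j < DD")
  case True
  then have "j < k + r" by auto
  note [measurable] = bn_meas[OF bn[OF this]]
  show ?thesis unfolding Tv_def by measurable
next
  case False
  then have "\<not> j < k" "\<not> j < k + r - 1" using r1 by auto
  then show ?thesis by (simp add: Tv_def)
qed

lemma expo_meas[measurable]: "(\<lambda>g::real^'n^'n. expo blk k r (\<lambda>j. - Tv (g *v z) j) i) \<in> borel_measurable borel"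
  unfolding expo_def by measurable

definition Fz :: "real^'n \<Rightarrow> real^'n^'n \<Rightarrow> real^'n^'n" where
  "Fz z g = a (\<lambda>j. - Tv (g *v z) j) ** g"

lemma Fz_meas[measurable]: "Fz z \<in> borel_measurable borel"
  by (intro vec_borel_measurable) (simp add: Fz_def a_mult_entry)

end
context P56 begin

lemma Xd_cases: assumes "X \<in> Xd" obtains h where "h \<in> SLd" "X = lat h"
  using assms by (auto simp: Xd_def)

lemma orbit_Xd: "E \<subseteq> Xd \<Longrightarrow> orb I E \<subseteq> Xd"
proof
  fix X assume E: "E \<subseteq> Xd" and "X \<in> orb I E"
  then obtain t Y where "Y \<in> E" "X = lat_act (a t) Y" by (auto simp: orbit_set_def)
  moreover obtain h where "h \<in> SLd" "Y = lat h" using \<open>Y \<in> E\<close> E by (auto elim: Xd_cases)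
  ultimately show "X \<in> Xd" by (simp add: lat_act_lat lat_Xd SLd_mult a_SLd)
qed

lemma orbit_char:
  assumes ES: "E \<subseteq> S" and g: "g \<in> SLd"
    and Idet: "\<And>s t. (\<forall>j<DD. s j = t j) \<Longrightarrow> s \<in> I \<longleftrightarrow> t \<in> I"
  shows "lat g \<in> orb I E \<longleftrightarrow>
     (\<exists>z\<in>Zvecs. (\<forall>i<DD. N i (g *v z) > 0) \<and> Tv (g *v z) \<in> I \<and> lat (Fz z g) \<in> E)"
proof
  assume "lat g \<in> orb I E"
  then obtain t Y where tY: "t \<in> I" "Y \<in> E" "lat g = lat_act (a t) Y" by (auto simp: orbit_set_def)
  then have "Y \<in> S" using ES by auto
  then obtain v where v: "primitive Y v" "v \<in> L" by (auto simp: S_eps_def)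
  have "a t *v v \<in> lat g" using tY(3) v(1) by (auto simp: lat_act_def primitive_def)
  then obtain z where z: "z \<in> Zvecs" "a t *v v = g *v z" by (auto simp: lat_def)
  define w where "w = g *v z"
  have vw: "v = a (\<lambda>i. - t i) *v w"
    using z(2) by (simp add: w_def matrix_vector_mul_assoc[symmetric, of "a (\<lambda>i. - t i)"] a_inv2[unfolded matrix_vector_mul_assoc[symmetric]]
       flip: matrix_vector_mul_assoc) (metis a_inv2 matrix_vector_mul_assoc matrix_vector_mul_lid)
  have "\<forall>i<DD. N i (a (\<lambda>i. - t i) *v w) = 1" using v(2) vw by (simp add: L_eps_def)
  from Tv_char[OF this] have T: "\<forall>i<DD. N i w > 0" "\<forall>j<DD. Tv w j = t j" by auto
  have "Tv w \<in> I" using Idet[of "Tv w" t] T tY(1) by auto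
  moreover have "a (\<lambda>j. - Tv w j) = a (\<lambda>j. - t j)" by (rule a_cong) (use T in auto)
  then have "lat (Fz z g) = Y"
    by (simp add: Fz_def w_def[symmetric] lat_act_lat[symmetric] tY(3) lat_act_a_inv1)
  ultimately show "\<exists>z\<in>Zvecs. (\<forall>i<DD. N i (g *v z) > 0) \<and> Tv (g *v z) \<in> I \<and> lat (Fz z g) \<in> E"
    using z(1) T(1) tY(2) unfolding w_def by blast
next
  assume "\<exists>z\<in>Zvecs. (\<forall>i<DD. N i (g *v z) > 0) \<and> Tv (g *v z) \<in> I \<and> lat (Fz z g) \<in> E"
  then obtain z where z: "Tv (g *v z) \<in> I" "lat (Fz z g) \<in> E" by blast
  have "lat g = lat_act (a (Tv (g *v z))) (lat (Fz z g))"
    by (simp add: Fz_def lat_act_lat[symmetric] lat_act_a_inv2)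
  then show "lat g \<in> orb I E" using z by (auto simp: orbit_set_def)
qed

lemma Fz_SLd: "g \<in> SLd \<Longrightarrow> Fz z g \<in> SLd"
  by (simp add: Fz_def SLd_mult a_SLd)

lemma orbit_meas:
  assumes E: "E \<in> sets m" "E \<subseteq> S" and J: "J \<in> sets (Pi\<^sub>M {..<DD} (\<lambda>_. borel))"
  shows "orb {t. (\<lambda>j\<in>{..<DD}. t j) \<in> J} E \<in> sets m"
proof (rule sets_mI)
  define I where "I = {t. (\<lambda>j\<in>{..<DD}. t j) \<in> J}"
  have PE: "{g \<in> SLd. lat g \<in> E} \<in> sets borel" and EX: "E \<subseteq> Xd" using sets_mD[OF E(1)] by auto
  show "orb {t. (\<lambda>j\<in>{..<DD}. t j) \<in> J} E \<subseteq> Xd" by (rule orbit_Xd[OF EX])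
  have Idet: "s \<in> I \<longleftrightarrow> t \<in> I" if "\<forall>j<DD. s j = t j" for s t
  proof -
    have "(\<lambda>j\<in>{..<DD}. s j) = (\<lambda>j\<in>{..<DD}. t j)" using that by auto
    then show ?thesis by (simp add: I_def)
  qed
  have eq: "{g \<in> SLd. lat g \<in> orb I E} =
     (\<Union>z\<in>Zvecs. SLd \<inter> {g \<in> space borel. (\<forall>i<DD. N i (g *v z) > 0) \<and>
         (\<lambda>j\<in>{..<DD}. Tv (g *v z) j) \<in> J \<and> Fz z g \<in> {g \<in> SLd. lat g \<in> E}})"
    using orbit_char[OF E(2) _ Idet] Fz_SLd by (auto simp: I_def)
  have "SLd \<inter> {g \<in> space borel. (\<forall>i<DD. N i (g *v z) > 0) \<and>
         (\<lambda>j\<in>{..<DD}. Tv (g *v z) j) \<in> J \<and> Fz z g \<in> {g \<in> SLd. lat g \<in> E}} \<in> sets borel" for z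
  proof -
    have [measurable]: "(\<lambda>g. N i (g *v z)) \<in> borel_measurable borel" if "i < DD" for i
    proof -
      have "i < k + r" using that by auto
      note [measurable] = bn_meas[OF bn[OF this]]
      show ?thesis by measurable
    qed
    have [measurable]: "(\<lambda>g. \<lambda>j\<in>{..<DD}. Tv (g *v z) j) \<in> measurable borel (Pi\<^sub>M {..<DD} (\<lambda>_. borel))"
      by measurable
    note [measurable] = J PE SLd_borel
    show ?thesis by measurable
  qed
  then show "{g \<in> SLd. lat g \<in> orb {t. (\<lambda>j\<in>{..<DD}. t j) \<in> J} E} \<in> sets borel"
    unfolding I_def[symmetric] eq by (intro sets.countable_UN'' Zvecs_countable)
qed

end
context P56 begin

lemma L_borel: "L \<in> sets borel"
proof -
  have "L = {v \<in> space borel. (\<forall>i<DD. N i v = 1) \<and> N DD v ^ bsize blk DD \<le> \<epsilon>}"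
    by (simp add: L_eps_def)
  also have "\<dots> \<in> sets borel"
  proof -
    have [measurable]: "N i \<in> borel_measurable borel" if "i \<le> DD" for i
      using that r1 by (intro bn_meas[OF bn]) auto
    show ?thesis by measurable
  qed
  finally show ?thesis .
qed

lemma S_Xd: "S \<subseteq> Xd" by (auto simp: S_eps_def)

lemma S_sets: "S \<in> sets m"
proof (rule sets_mI[OF S_Xd])
  have eq: "{g \<in> SLd. lat g \<in> S} = (\<Union>z\<in>{z\<in>Zvecs. z \<noteq> 0 \<and> (\<forall>c. c *\<^sub>R z \<in> Zvecs \<longrightarrow> c \<in> \<int>)}.
      SLd \<inter> {g \<in> space borel. g *v z \<in> L})" (is "?A = ?B")
  proof
    show "?A \<subseteq> ?B"
    proof
      fix g assume "g \<in> ?A"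
      then have g: "g \<in> SLd" and "lat g \<in> S" by auto
      then obtain v where v: "primitive (lat g) v" "v \<in> L" by (auto simp: S_eps_def)
      then obtain z where z: "z \<in> Zvecs" "v = g *v z" by (auto simp: primitive_def lat_def)
      show "g \<in> ?B" using primitive_lat_iff[OF g z(1)] v z g by auto
    qed
  next
    show "?B \<subseteq> ?A"
    proof
      fix g assume "g \<in> ?B"
      then obtain z where z: "z \<in> Zvecs" "z \<noteq> 0" "\<forall>c. c *\<^sub>R z \<in> Zvecs \<longrightarrow> c \<in> \<int>" and g: "g \<in> SLd" "g *v z \<in> L"
        by auto
      then have "primitive (lat g) (g *v z)" using primitive_lat_iff[OF g(1) z(1)] by auto
      then show "g \<in> ?A" using g by (auto simp: S_eps_def lat_Xd)
    qed
  qed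
  show "{g \<in> SLd. lat g \<in> S} \<in> sets borel"
    unfolding eq
  proof (intro sets.countable_UN'' countable_subset[OF _ Zvecs_countable])
    fix z show "SLd \<inter> {g \<in> space borel. g *v z \<in> L} \<in> sets borel"
      using L_borel SLd_borel by measurable
  qed auto
qed

definition Zs :: "real \<Rightarrow> (real^'n) set set" where
  "Zs \<sigma> = {X \<in> S. \<exists>u. (\<forall>i<DD. \<bar>u i\<bar> \<le> \<sigma>) \<and> (\<exists>i<DD. u i \<noteq> 0) \<and> lat_act (a u) X \<in> S}"

definition Ws :: "real \<Rightarrow> (real^'n) set set" where
  "Ws \<sigma> = S - Zs \<sigma>"

lemma orbI: "t \<in> I \<Longrightarrow> Y \<in> E \<Longrightarrow> lat_act (a t) Y \<in> orb I E"
  unfolding orbit_set_def by blast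

lemma orbE: assumes "X \<in> orb I E" obtains t Y where "t \<in> I" "Y \<in> E" "X = lat_act (a t) Y"
  using assms unfolding orbit_set_def by blast

lemma Zs_eq: "Zs \<sigma> = S \<inter> orb {t. (\<lambda>j\<in>{..<DD}. t j) \<in> (\<Pi>\<^sub>E j\<in>{..<DD}. {-\<sigma>..\<sigma>}) - (\<Pi>\<^sub>E j\<in>{..<DD}. {0})} S"
  (is "_ = S \<inter> orb ?I S")
proof (intro set_eqI iffI)
  fix X assume "X \<in> Zs \<sigma>"
  then obtain u where u: "X \<in> S" "\<forall>i<DD. \<bar>u i\<bar> \<le> \<sigma>" "\<exists>i<DD. u i \<noteq> 0" "lat_act (a u) X \<in> S"
    unfolding Zs_def by blast
  have X: "X = lat_act (a (\<lambda>i. - u i)) (lat_act (a u) X)" by (simp only: lat_act_a_inv1)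
  have "(\<lambda>i. - u i) \<in> ?I"
  proof -
    obtain i where i: "i < DD" "u i \<noteq> 0" using u(3) by blast
    have "(\<lambda>j\<in>{..<DD}. - u j) \<notin> (\<Pi>\<^sub>E j\<in>{..<DD}. {0})"
    proof
      assume "(\<lambda>j\<in>{..<DD}. - u j) \<in> (\<Pi>\<^sub>E j\<in>{..<DD}. {0})"
      then have "(\<lambda>j\<in>{..<DD}. - u j) i \<in> {0}" using i(1) by (auto simp: PiE_iff)
      then show False using i by simp
    qed
    moreover have "(\<lambda>j\<in>{..<DD}. - u j) \<in> (\<Pi>\<^sub>E j\<in>{..<DD}. {-\<sigma>..\<sigma>})"
    proof (rule PiE_I)
      fix j assume "j \<in> {..<DD}"
      then show "(\<lambda>j\<in>{..<DD}. - u j) j \<in> {-\<sigma>..\<sigma>}" using u(2) by (simp add: abs_le_iff)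
    qed simp
    ultimately show ?thesis by simp
  qed
  then have "lat_act (a (\<lambda>i. - u i)) (lat_act (a u) X) \<in> orb ?I S" using u(4) by (rule orbI)
  then show "X \<in> S \<inter> orb ?I S" using u(1) X by simp
next
  fix X assume XS: "X \<in> S \<inter> orb ?I S"
  then obtain t Y where tY: "t \<in> ?I" "Y \<in> S" "X = lat_act (a t) Y"
    by (auto elim: orbE)
  have "lat_act (a (\<lambda>i. - t i)) X = Y" using tY(3) by (simp only: lat_act_a_inv1)
  moreover have "\<forall>i<DD. \<bar>- t i\<bar> \<le> \<sigma>"
  proof (intro allI impI)
    fix i assume "i < DD"
    then have "(\<lambda>j\<in>{..<DD}. t j) i \<in> {-\<sigma>..\<sigma>}" using tY(1) by (auto simp: PiE_iff)
    then show "\<bar>- t i\<bar> \<le> \<sigma>" using \<open>i < DD\<close> by (simp add: abs_le_iff)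
  qed
  moreover have "\<exists>i<DD. - t i \<noteq> 0"
  proof (rule ccontr)
    assume "\<not> (\<exists>i<DD. - t i \<noteq> 0)"
    then have "(\<lambda>j\<in>{..<DD}. t j) \<in> (\<Pi>\<^sub>E j\<in>{..<DD}. {0})" by auto
    then show False using tY(1) by simp
  qed
  ultimately have "\<exists>u. (\<forall>i<DD. \<bar>u i\<bar> \<le> \<sigma>) \<and> (\<exists>i<DD. u i \<noteq> 0) \<and> lat_act (a u) X \<in> S"
    using tY(2) by (intro exI[of _ "\<lambda>i. - t i"]) simp
  moreover have "X \<in> S" using XS by simp
  ultimately show "X \<in> Zs \<sigma>" unfolding Zs_def by simp
qed

lemma Zs_sets: "Zs \<sigma> \<in> sets m"
proof -
  have "(\<Pi>\<^sub>E j\<in>{..<DD}. {-\<sigma>..\<sigma>}) - (\<Pi>\<^sub>E j\<in>{..<DD}. {0}) \<in> sets (Pi\<^sub>M {..<DD} (\<lambda>_. borel))"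
    by (intro sets.Diff sets_PiM_I_finite) auto
  from orbit_meas[OF S_sets order_refl this] show ?thesis
    unfolding Zs_eq by (intro sets.Int S_sets)
qed

lemma Ws_sets: "Ws \<sigma> \<in> sets m"
  unfolding Ws_def by (intro sets.Diff S_sets Zs_sets)

lemma sigma_S: "sigma_algebra S {E \<in> sets m. E \<subseteq> S}"
proof -
  have "sigma_algebra S ((\<inter>) S ` sets m)"
    by (rule sets.restricted_sigma_algebra[OF S_sets])
  moreover have "(\<inter>) S ` sets m = {E \<in> sets m. E \<subseteq> S}"
  proof (intro set_eqI iffI)
    fix E assume "E \<in> (\<inter>) S ` sets m"
    then show "E \<in> {E \<in> sets m. E \<subseteq> S}" using S_sets by auto
  next
    fix E assume "E \<in> {E \<in> sets m. E \<subseteq> S}"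
    then show "E \<in> (\<inter>) S ` sets m" by (intro image_eqI[of _ _ E]) auto
  qed
  ultimately show ?thesis by simp
qed

end
context P56 begin

definition box :: "(nat \<Rightarrow> real) \<Rightarrow> real \<Rightarrow> (nat \<Rightarrow> real) set" where
  "box c s = {t. \<forall>i<DD. c i \<le> t i \<and> t i \<le> c i + s}"

lemma box_J: "box c s = {t. (\<lambda>j\<in>{..<DD}. t j) \<in> (\<Pi>\<^sub>E i\<in>{..<DD}. {c i .. c i + s})}"
  by (auto simp: box_def PiE_iff)

lemma Icube_box: "Icube k r s = box (\<lambda>_. 0) s"
  by (simp add: Icube_def box_def)

lemma orb_box_sets: "C \<in> sets m \<Longrightarrow> C \<subseteq> S \<Longrightarrow> orb (box c s) C \<in> sets m"
  unfolding box_J by (intro orbit_meas) auto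

lemma orb_Icube_sets: "C \<in> sets m \<Longrightarrow> C \<subseteq> S \<Longrightarrow> orb (Icube k r s) C \<in> sets m"
  unfolding Icube_box by (rule orb_box_sets)

lemma orb_translate: "orb (box c s) C = lat_act (a c) ` orb (Icube k r s) C"
proof (intro set_eqI iffI)
  fix X assume "X \<in> orb (box c s) C"
  then obtain t Y where tY: "t \<in> box c s" "Y \<in> C" "X = lat_act (a t) Y" by (rule orbE)
  define t' where "t' = (\<lambda>i. t i - c i)"
  have "t' \<in> Icube k r s" using tY(1) by (auto simp: t'_def box_def Icube_def)
  then have "lat_act (a t') Y \<in> orb (Icube k r s) C" using tY(2) by (rule orbI)
  moreover have "(\<lambda>i. c i + t' i) = t" by (simp add: t'_def)
  then have "X = lat_act (a c) (lat_act (a t') Y)" using tY(3) by (simp add: lat_act_comp a_mat_mult)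
  ultimately show "X \<in> lat_act (a c) ` orb (Icube k r s) C" by blast
next
  fix X assume "X \<in> lat_act (a c) ` orb (Icube k r s) C"
  then obtain X' where X': "X' \<in> orb (Icube k r s) C" "X = lat_act (a c) X'" by blast
  then obtain t Y where tY: "t \<in> Icube k r s" "Y \<in> C" "X' = lat_act (a t) Y" by (auto elim: orbE)
  have "(\<lambda>i. c i + t i) \<in> box c s" using tY(1) by (auto simp: box_def Icube_def)
  then have "lat_act (a (\<lambda>i. c i + t i)) Y \<in> orb (box c s) C" using tY(2) by (rule orbI)
  then show "X \<in> orb (box c s) C" using X' tY(3) by (simp add: lat_act_comp a_mat_mult)
qed

definition ff :: "(real^'n) set set \<Rightarrow> real \<Rightarrow> ennreal" where
  "ff C s = emeasure m (orb (Icube k r s) C)"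

lemma ff_box: assumes "C \<in> sets m" "C \<subseteq> S" shows "emeasure m (orb (box c s) C) = ff C s"
  unfolding orb_translate ff_def using inv a_SLd orb_Icube_sets[OF assms] by blast

lemma orb_mono_I: "I \<subseteq> I' \<Longrightarrow> orb I C \<subseteq> orb I' C"
  unfolding orbit_set_def by blast

lemma orb_mono_C: "C \<subseteq> C' \<Longrightarrow> orb I C \<subseteq> orb I C'"
  unfolding orbit_set_def by blast

lemma orb_UN_I: "orb (\<Union>p\<in>G. I p) C = (\<Union>p\<in>G. orb (I p) C)"
  unfolding orbit_set_def by blast

lemma orb_UN_C: "orb I (\<Union>i. C i) = (\<Union>i. orb I (C i))"
  unfolding orbit_set_def by blast

lemma ff_mono: assumes "C \<in> sets m" "C \<subseteq> S" "s \<le> s'" shows "ff C s \<le> ff C s'"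
  unfolding ff_def
  by (intro emeasure_mono orb_mono_I orb_Icube_sets assms) (use assms(3) in \<open>auto simp: Icube_def\<close>)

lemma Icube_cover: assumes "s > 0" "j \<ge> 1"
  shows "Icube k r (real j * s) \<subseteq> (\<Union>p\<in>(\<Pi>\<^sub>E i\<in>{..<DD}. {..<j}). box (\<lambda>i. s * real (p i)) s)"
proof
  fix t assume t: "t \<in> Icube k r (real j * s)"
  define p where "p = (\<lambda>i\<in>{..<DD}. min (j - 1) (nat \<lfloor>t i / s\<rfloor>))"
  have "p \<in> (\<Pi>\<^sub>E i\<in>{..<DD}. {..<j})" using assms(2) by (auto simp: p_def)
  moreover have "t \<in> box (\<lambda>i. s * real (p i)) s"
    unfolding box_def
  proof (intro CollectI allI impI)
    fix i assume i: "i < DD"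
    then have ti: "0 \<le> t i" "t i \<le> real j * s" using t by (auto simp: Icube_def)
    have fl: "real_of_int \<lfloor>t i / s\<rfloor> \<le> t i / s" "t i / s < real_of_int \<lfloor>t i / s\<rfloor> + 1"
      by linarith+
    have fl0: "\<lfloor>t i / s\<rfloor> \<ge> 0" using ti assms(1) by simp
    show "s * real (p i) \<le> t i \<and> t i \<le> s * real (p i) + s"
    proof (cases "nat \<lfloor>t i / s\<rfloor> \<le> j - 1")
      case True
      then have "p i = nat \<lfloor>t i / s\<rfloor>" using i by (simp add: p_def)
      then have "real (p i) = real_of_int \<lfloor>t i / s\<rfloor>" using fl0 by simp
      have A: "s * real_of_int \<lfloor>t i / s\<rfloor> \<le> t i" using fl(1) assms(1) by (simp add: le_divide_eq mult.commute)
      have B: "t i < s * real_of_int \<lfloor>t i / s\<rfloor> + s" using fl(2) assms(1) by (simp add: divide_less_eq algebra_simps)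
      show ?thesis using A B \<open>real (p i) = _\<close> by simp
    next
      case False
      then have pi: "p i = j - 1" using i by (simp add: p_def)
      have "j \<le> nat \<lfloor>t i / s\<rfloor>" using False assms(2) by linarith
      then have "int j \<le> \<lfloor>t i / s\<rfloor>" using fl0 by (simp add: le_nat_iff)
      then have "real j \<le> t i / s" by (simp add: le_floor_iff)
      then have "t i = real j * s" using ti assms(1) by (simp add: field_simps)
      then show ?thesis using pi assms by (simp add: of_nat_diff algebra_simps)
    qed
  qed
  ultimately show "t \<in> (\<Union>p\<in>(\<Pi>\<^sub>E i\<in>{..<DD}. {..<j}). box (\<lambda>i. s * real (p i)) s)" by blast
qed

lemma ff_cover: assumes "C \<in> sets m" "C \<subseteq> S" "s > 0" "j \<ge> 1"
  shows "ff C (real j * s) \<le> of_nat (j ^ DD) * ff C s"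
proof -
  let ?G = "\<Pi>\<^sub>E i\<in>{..<DD}. {..<j}"
  have sub: "orb (Icube k r (real j * s)) C \<subseteq> (\<Union>p\<in>?G. orb (box (\<lambda>i. s * real (p i)) s) C)"
    unfolding orb_UN_I[symmetric] by (rule orb_mono_I[OF Icube_cover[OF assms(3,4)]])
  have meas: "\<And>p. orb (box (\<lambda>i. s * real (p i)) s) C \<in> sets m" by (rule orb_box_sets[OF assms(1,2)])
  have fin: "finite ?G" by (intro finite_PiE) auto
  have "ff C (real j * s) \<le> emeasure m (\<Union>p\<in>?G. orb (box (\<lambda>i. s * real (p i)) s) C)"
    unfolding ff_def
    by (rule emeasure_mono[OF sub sets.finite_UN[OF fin]]) (rule meas)
  also have "\<dots> \<le> (\<Sum>p\<in>?G. emeasure m (orb (box (\<lambda>i. s * real (p i)) s) C))"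
    by (rule emeasure_subadditive_finite[OF fin]) (use meas in blast)
  also have "\<dots> = (\<Sum>p\<in>?G. ff C s)" using ff_box[OF assms(1,2)] by simp
  also have "\<dots> = of_nat (card ?G) * ff C s" by simp
  also have "card ?G = j ^ DD" by (simp add: card_PiE)
  finally show ?thesis .
qed

end
context P56 begin

definition sq :: "nat \<Rightarrow> real" where "sq n = 1 / fact (Suc n)"

lemma sq_pos: "sq n > 0" by (simp add: sq_def)

lemma sq_rel: "sq n = real (Suc (Suc n)) * sq (Suc n)"
  by (simp add: sq_def field_simps del: fact_Suc) (simp add: fact_Suc[of "Suc n"] algebra_simps)

lemma sq_lim: "sq \<longlonglongrightarrow> 0"
proof (rule Lim_null_comparison[OF _ LIMSEQ_inverse_real_of_nat])
  show "\<forall>\<^sub>F n in sequentially. norm (sq n) \<le> inverse (real (Suc n))"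
  proof (intro always_eventually allI)
    fix n
    have "real (Suc n) \<le> fact (Suc n)" using fact_ge_self[of "Suc n"] by simp
    then show "norm (sq n) \<le> inverse (real (Suc n))"
      by (simp add: sq_def divide_simps)
  qed
qed

definition gg :: "nat \<Rightarrow> (real^'n) set set \<Rightarrow> ennreal" where
  "gg n C = ennreal (1 / sq n ^ DD) * ff C (sq n)"

lemma gg_inc: assumes "C \<in> sets m" "C \<subseteq> S" shows "gg n C \<le> gg (Suc n) C"
proof -
  have "ff C (sq n) \<le> of_nat ((Suc (Suc n)) ^ DD) * ff C (sq (Suc n))"
    using ff_cover[OF assms sq_pos, of "Suc (Suc n)"] sq_rel[of n] by simp
  then have "gg n C \<le> ennreal (1 / sq n ^ DD) * (of_nat ((Suc (Suc n)) ^ DD) * ff C (sq (Suc n)))"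
    unfolding gg_def by (rule mult_left_mono) simp
  also have "\<dots> = (ennreal (1 / sq n ^ DD) * ennreal (real ((Suc (Suc n)) ^ DD))) * ff C (sq (Suc n))"
    by (simp only: ennreal_of_nat_eq_real_of_nat mult.assoc)
  also have "ennreal (1 / sq n ^ DD) * ennreal (real ((Suc (Suc n)) ^ DD)) = ennreal (1 / sq n ^ DD * real ((Suc (Suc n)) ^ DD))"
    by (rule ennreal_mult[symmetric]) (use sq_pos[of n] in auto)
  also have "1 / sq n ^ DD * real ((Suc (Suc n)) ^ DD) = 1 / sq (Suc n) ^ DD"
  proof -
    have e: "sq n ^ DD = real (Suc (Suc n)) ^ DD * sq (Suc n) ^ DD" by (subst sq_rel) (simp add: power_mult_distrib)
    have p: "real (Suc (Suc n)) ^ DD > 0" "sq (Suc n) ^ DD > 0" using sq_pos[of "Suc n"] by auto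
    show ?thesis unfolding e using p by (simp add: field_simps)
  qed
  finally show ?thesis by (simp add: gg_def)
qed

lemma incseq_gg: "C \<in> sets m \<Longrightarrow> C \<subseteq> S \<Longrightarrow> incseq (\<lambda>n. gg n C)"
  by (rule incseq_SucI) (rule gg_inc)

lemma ennreal_limit_le:
  fixes X G :: ennreal and c :: "nat \<Rightarrow> real"
  assumes "\<And>n. X \<le> ennreal (c n) * G" "c \<longlonglongrightarrow> 1"
  shows "X \<le> G"
proof -
  have "(\<lambda>n. ennreal (c n) * G) \<longlonglongrightarrow> ennreal 1 * G"
    by (intro tendsto_mult_ennreal tendsto_ennrealI assms(2) tendsto_const) simp
  from LIMSEQ_le_const[OF this, of X] assms(1) show ?thesis by auto
qed

lemma mu_eq: assumes "C \<in> sets m" "C \<subseteq> S" shows "mu_S m blk k r C = (SUP n. gg n C)"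
proof (rule antisym)
  let ?G = "SUP n. gg n C"
  show "mu_S m blk k r C \<le> ?G"
    unfolding mu_S_def ff_def[symmetric]
  proof (rule SUP_least)
    fix \<tau> :: real assume "\<tau> \<in> {0<..}"
    then have tau: "\<tau> > 0" by simp
    define c where "c n = (1 + sq n / \<tau>) ^ DD" for n
    show "ennreal (1 / \<tau> ^ (k + r - 1)) * ff C \<tau> \<le> ?G"
    proof (rule ennreal_limit_le)
      show "c \<longlonglongrightarrow> 1" unfolding c_def using sq_lim tau
        by (auto intro!: tendsto_eq_intros)
      fix n
      define j where "j = nat \<lceil>\<tau> / sq n\<rceil>"
      have sn: "sq n > 0" by (rule sq_pos)
      have j1: "j \<ge> 1"
      proof -
        have "0 < \<tau> / sq n" using tau sn by simp
        also have "\<tau> / sq n \<le> real_of_int \<lceil>\<tau> / sq n\<rceil>" by (rule le_of_int_ceiling)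
        finally have "0 < \<lceil>\<tau> / sq n\<rceil>" by simp
        then show ?thesis unfolding j_def by linarith
      qed
      have "\<tau> / sq n \<le> real j" unfolding j_def by linarith
      then have tj: "\<tau> \<le> real j * sq n" using sn by (simp add: divide_le_eq)
      have "real j = real_of_int \<lceil>\<tau> / sq n\<rceil>" using j1 unfolding j_def by simp
      then have "real j < \<tau> / sq n + 1" using ceiling_correct[of "\<tau> / sq n"] by linarith
      then have jt: "real j * sq n \<le> \<tau> + sq n" using sn by (simp add: field_simps)
      have "ff C \<tau> \<le> ff C (real j * sq n)" by (rule ff_mono[OF assms tj])
      also have "\<dots> \<le> of_nat (j ^ DD) * ff C (sq n)" by (rule ff_cover[OF assms sn j1])
      finally have "ennreal (1 / \<tau> ^ DD) * ff C \<tau> \<le> ennreal (1 / \<tau> ^ DD) * (of_nat (j ^ DD) * ff C (sq n))"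
        by (rule mult_left_mono) simp
      also have "\<dots> = ennreal ((real j * sq n / \<tau>) ^ DD) * gg n C"
      proof -
        have "1 / \<tau> ^ DD * real (j ^ DD) = (real j * sq n / \<tau>) ^ DD * (1 / sq n ^ DD)"
          using sn tau by (simp add: power_mult_distrib power_divide field_simps)
        moreover have "ennreal (1 / \<tau> ^ DD) * (of_nat (j ^ DD) * ff C (sq n)) = ennreal (1 / \<tau> ^ DD * real (j ^ DD)) * ff C (sq n)"
          by (subst ennreal_mult) (use tau in \<open>auto simp: ennreal_of_nat_eq_real_of_nat mult.assoc\<close>)
        moreover have "ennreal ((real j * sq n / \<tau>) ^ DD * (1 / sq n ^ DD)) * ff C (sq n) = ennreal ((real j * sq n / \<tau>) ^ DD) * gg n C"
          by (subst ennreal_mult) (use tau sn in \<open>auto simp: gg_def mult.assoc\<close>)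
        ultimately show ?thesis by simp
      qed
      also have "\<dots> \<le> ennreal (c n) * ?G"
      proof (rule mult_mono)
        have "real j * sq n / \<tau> \<le> 1 + sq n / \<tau>" using jt tau by (simp add: field_simps)
        then show "ennreal ((real j * sq n / \<tau>) ^ DD) \<le> ennreal (c n)"
          unfolding c_def using tau sn by (intro ennreal_leI power_mono) auto
        show "gg n C \<le> ?G" by (rule SUP_upper) simp
      qed auto
      finally show "ennreal (1 / \<tau> ^ (k + r - 1)) * ff C \<tau> \<le> ennreal (c n) * ?G" .
    qed
  qed
  show "?G \<le> mu_S m blk k r C"
    unfolding mu_S_def ff_def[symmetric]
  proof (rule SUP_least)
    fix n
    show "gg n C \<le> (SUP \<tau>\<in>{0<..}. ennreal (1 / \<tau> ^ (k + r - 1)) * ff C \<tau>)"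
      unfolding gg_def using sq_pos[of n] by (intro SUP_upper2[of "sq n"]) auto
  qed
qed

end
context P56 begin

lemma N_lower_all: "\<exists>c>0. \<forall>w R. (\<forall>i<k+r. N i w \<le> R) \<longrightarrow> (\<forall>l. c * \<bar>w$l\<bar> \<le> R)"
proof -
  have "\<forall>i\<in>{..<k+r}. \<exists>c>0. \<forall>v. \<forall>l\<in>block blk i. c * \<bar>v$l\<bar> \<le> N i v"
    using bn_lower[OF bn] blk_ne by auto
  then obtain cf where cf: "\<And>i. i \<in> {..<k+r} \<Longrightarrow> cf i > 0 \<and> (\<forall>v. \<forall>l\<in>block blk i. cf i * \<bar>v$l\<bar> \<le> N i v)"
    by metis
  define c where "c = Min (cf ` {..<k+r})"
  have ne: "cf ` {..<k+r} \<noteq> {}" using k1 by auto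
  have cpos: "c > 0" unfolding c_def using cf ne by (subst Min_gr_iff) auto
  show ?thesis
  proof (intro exI[of _ c] conjI cpos allI impI)
    fix w :: "real^'n" and R l assume H: "\<forall>i<k+r. N i w \<le> R"
    let ?i = "blk l"
    have i: "?i \<in> {..<k+r}" using blk_lt by auto
    have "c \<le> cf ?i" unfolding c_def using i by (intro Min_le) auto
    then have "c * \<bar>w$l\<bar> \<le> cf ?i * \<bar>w$l\<bar>" by (intro mult_right_mono) auto
    also have "\<dots> \<le> N ?i w" using cf[OF i] by (auto simp: block_def)
    also have "\<dots> \<le> R" using H i by auto
    finally show "c * \<bar>w$l\<bar> \<le> R" .
  qed
qed

lemma finite_Zbox: "finite {z \<in> (Zvecs :: (real^'n) set). \<forall>l. \<bar>z$l\<bar> \<le> B}"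
proof -
  define M where "M = \<lceil>B\<rceil>"
  have "{z \<in> (Zvecs :: (real^'n) set). \<forall>l. \<bar>z$l\<bar> \<le> B} \<subseteq>
        (\<lambda>f. \<chi> l. of_int (f l)) ` (\<Pi>\<^sub>E l\<in>(UNIV::'n set). {-M..M})"
  proof
    fix z :: "real^'n" assume z: "z \<in> {z \<in> Zvecs. \<forall>l. \<bar>z$l\<bar> \<le> B}"
    then have zi: "\<forall>l. of_int \<lfloor>z$l\<rfloor> = z$l"
      by (metis (mono_tags) Zvecs_def mem_Collect_eq Ints_cases floor_of_int)
    then have "(\<chi> l. real_of_int \<lfloor>z$l\<rfloor>) = z" by (simp only: vec_lambda_eta)
    moreover have "(\<lambda>l. \<lfloor>z$l\<rfloor>) \<in> (\<Pi>\<^sub>E l\<in>(UNIV::'n set). {-M..M})"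
    proof -
      have ab: "\<bar>\<lfloor>z$l\<rfloor>\<bar> \<le> M" for l
      proof -
        have e: "real_of_int \<lfloor>z$l\<rfloor> = z$l" using zi by blast
        have "\<bar>z$l\<bar> \<le> B" using z by blast
        then have "\<bar>real_of_int \<lfloor>z$l\<rfloor>\<bar> \<le> B" by (simp only: e)
        then have "real_of_int \<bar>\<lfloor>z$l\<rfloor>\<bar> \<le> B" by simp
        then show ?thesis unfolding M_def by (simp add: le_ceiling_iff)
      qed
      have "-M \<le> \<lfloor>z$l\<rfloor> \<and> \<lfloor>z$l\<rfloor> \<le> M" for l using ab[of l] unfolding abs_le_iff by linarith
      then show ?thesis by (intro PiE_I) auto
    qed
    ultimately show "z \<in> (\<lambda>f. \<chi> l. of_int (f l)) ` (\<Pi>\<^sub>E l\<in>(UNIV::'n set). {-M..M})"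
      by (metis image_eqI)
  qed
  moreover have "finite ((\<lambda>f. \<chi> l. real_of_int (f l)) ` (\<Pi>\<^sub>E l\<in>(UNIV::'n set). {-M..M}))"
    by (intro finite_imageI finite_PiE) auto
  ultimately show ?thesis by (rule finite_subset)
qed

definition KK :: real where "KK = 1 + (\<Sum>j<DD. real (bsize blk j)) / real (bsize blk DD)"

lemma expo_bound: assumes "\<forall>i<DD. \<bar>u i\<bar> \<le> 1" shows "\<bar>expo blk k r u i\<bar> \<le> KK"
proof -
  have bD: "real (bsize blk DD) > 0" using bsize_pos[of DD] r1 by simp
  have s0: "0 \<le> (\<Sum>j<DD. real (bsize blk j)) / real (bsize blk DD)" by (intro divide_nonneg_nonneg sum_nonneg) auto
  show ?thesis
  proof (cases "i < DD")
    case True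
    then have "\<bar>expo blk k r u i\<bar> = \<bar>u i\<bar>" by (cases "i < k") (auto simp: expo_def)
    moreover have "\<bar>u i\<bar> \<le> 1" using assms True by simp
    ultimately show ?thesis using s0 unfolding KK_def by linarith
  next
    case False
    then have e: "expo blk k r u i = ((\<Sum>j\<in>{k..<DD}. real (bsize blk j) * u j) - (\<Sum>j<k. real (bsize blk j) * u j)) / real (bsize blk DD)"
      using r1 by (simp add: expo_def)
    have "\<bar>(\<Sum>j\<in>{k..<DD}. real (bsize blk j) * u j)\<bar> \<le> (\<Sum>j\<in>{k..<DD}. real (bsize blk j))"
    proof -
      have "\<bar>(\<Sum>j\<in>{k..<DD}. real (bsize blk j) * u j)\<bar> \<le> (\<Sum>j\<in>{k..<DD}. \<bar>real (bsize blk j) * u j\<bar>)" by (rule sum_abs)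
      also have "\<dots> \<le> (\<Sum>j\<in>{k..<DD}. real (bsize blk j))"
        using assms by (intro sum_mono) (auto simp: abs_mult intro!: mult_left_le)
      finally show ?thesis .
    qed
    moreover have "\<bar>(\<Sum>j<k. real (bsize blk j) * u j)\<bar> \<le> (\<Sum>j<k. real (bsize blk j))"
    proof -
      have "\<bar>(\<Sum>j<k. real (bsize blk j) * u j)\<bar> \<le> (\<Sum>j<k. \<bar>real (bsize blk j) * u j\<bar>)" by (rule sum_abs)
      also have "\<dots> \<le> (\<Sum>j<k. real (bsize blk j))"
        using assms r1 by (intro sum_mono) (auto simp: abs_mult intro!: mult_left_le)
      finally show ?thesis .
    qed
    moreover have "(\<Sum>j<DD. real (bsize blk j)) = (\<Sum>j<k. real (bsize blk j)) + (\<Sum>j\<in>{k..<DD}. real (bsize blk j))"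
    proof -
      have "{..<DD} = {..<k} \<union> {k..<DD}" using r1 by auto
      moreover have "(\<Sum>j\<in>{..<k} \<union> {k..<DD}. real (bsize blk j)) = (\<Sum>j<k. real (bsize blk j)) + (\<Sum>j\<in>{k..<DD}. real (bsize blk j))"
        by (rule sum.union_disjoint) auto
      ultimately show ?thesis by simp
    qed
    ultimately have "\<bar>expo blk k r u i\<bar> \<le> (\<Sum>j<DD. real (bsize blk j)) / real (bsize blk DD)"
    proof -
      let ?A = "(\<Sum>j\<in>{k..<DD}. real (bsize blk j) * u j)" and ?B = "(\<Sum>j<k. real (bsize blk j) * u j)"
      have "\<bar>?A - ?B\<bar> \<le> \<bar>?A\<bar> + \<bar>?B\<bar>" by (rule abs_triangle_ineq4)
      also have "\<dots> \<le> (\<Sum>j<DD. real (bsize blk j))" using calculation \<open>\<bar>?A\<bar> \<le> _\<close> \<open>\<bar>?B\<bar> \<le> _\<close> \<open>(\<Sum>j<DD. real (bsize blk j)) = _\<close> by linarith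
      finally have "\<bar>?A - ?B\<bar> \<le> (\<Sum>j<DD. real (bsize blk j))" .
      then show ?thesis unfolding e abs_divide using bD by (simp add: divide_right_mono)
    qed
    then show ?thesis by (simp add: KK_def)
  qed
qed

end
context P56 begin

lemma Zs_mono: "\<sigma> \<le> \<sigma>' \<Longrightarrow> Zs \<sigma> \<subseteq> Zs \<sigma>'"
  unfolding Zs_def by (smt (verit) Collect_mono)

lemma pow_le_max: fixes x :: real assumes "x \<ge> 0" "b \<ge> 1" "x ^ b \<le> \<epsilon>" shows "x \<le> max 1 \<epsilon>"
proof (cases "x \<le> 1")
  case False
  then have "x \<le> x ^ b" using assms(2) by (metis less_eq_real_def not_le one_le_power power_one_right power_increasing)
  then show ?thesis using assms(3) by simp
qed simp

lemma L_N_bound: assumes "v \<in> L" "i < k + r" shows "N i v \<le> max 1 \<epsilon>"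
proof (cases "i < DD")
  case True then show ?thesis using assms by (simp add: L_eps_def)
next
  case False
  then have "i = DD" using assms(2) by auto
  then have "N i v ^ bsize blk i \<le> \<epsilon>" using assms(1) by (simp add: L_eps_def)
  moreover have "bsize blk i \<ge> 1" using bsize_pos[OF assms(2)] by simp
  ultimately show ?thesis using pow_le_max bn_nonneg[OF bn[OF assms(2)]] by blast
qed

lemma exhaust: assumes X: "X \<in> S" shows "\<exists>j. X \<notin> Zs (1 / real (Suc j))"
proof (rule ccontr)
  assume "\<not> (\<exists>j. X \<notin> Zs (1 / real (Suc j)))"
  then have H: "\<forall>j. \<exists>u. (\<forall>i<DD. \<bar>u i\<bar> \<le> 1 / real (Suc j)) \<and> (\<exists>i<DD. u i \<noteq> 0) \<and> lat_act (a u) X \<in> S"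
    unfolding Zs_def by blast
  obtain h where h: "h \<in> SLd" "X = lat h" using X S_Xd by (auto elim: Xd_cases)
  obtain h' where h': "h' ** h = mat 1" using SLd_inv[OF h(1)] by blast
  from H obtain uf where uf: "\<And>j. (\<forall>i<DD. \<bar>uf j i\<bar> \<le> 1 / real (Suc j)) \<and> (\<exists>i<DD. uf j i \<noteq> 0) \<and> lat_act (a (uf j)) X \<in> S"
    by metis
  have "\<forall>j. \<exists>z\<in>Zvecs. a (uf j) *v (h *v z) \<in> L"
  proof
    fix j
    obtain v where v: "primitive (lat_act (a (uf j)) X) v" "v \<in> L"
      using uf[of j] by (auto simp: S_eps_def)
    then have "v \<in> lat_act (a (uf j)) (lat h)" using h(2) by (simp add: primitive_def)
    then obtain z where "z \<in> Zvecs" "v = a (uf j) *v (h *v z)" by (auto simp: lat_act_def lat_def)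
    then show "\<exists>z\<in>Zvecs. a (uf j) *v (h *v z) \<in> L" using v(2) by blast
  qed
  then obtain zf where zf: "\<And>j. zf j \<in> Zvecs" "\<And>j. a (uf j) *v (h *v zf j) \<in> L" by metis
  obtain c where c: "c > 0" "\<And>w R. (\<forall>i<k+r. N i w \<le> R) \<Longrightarrow> (\<forall>l. c * \<bar>w$l\<bar> \<le> R)"
    using N_lower_all by blast
  define R where "R = exp KK * max 1 \<epsilon>"
  define B where "B = (\<Sum>l\<in>UNIV. \<Sum>m\<in>UNIV. \<bar>h'$l$m\<bar>) * (R / c)"
  have zbound: "zf j \<in> {z \<in> Zvecs. \<forall>l. \<bar>z$l\<bar> \<le> B}" for j
  proof -
    define w where "w = h *v zf j"
    have ub: "\<forall>i<DD. \<bar>uf j i\<bar> \<le> 1"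
    proof (intro allI impI)
      fix i assume "i < DD"
      then have "\<bar>uf j i\<bar> \<le> 1 / real (Suc j)" using uf[of j] by blast
      also have "\<dots> \<le> 1" by simp
      finally show "\<bar>uf j i\<bar> \<le> 1" .
    qed
    have Nw: "N i w \<le> R" if i: "i < k + r" for i
    proof -
      have "N i (a (uf j) *v w) = exp (expo blk k r (uf j) i) * N i w" by (rule N_a[OF i])
      then have "N i w = exp (- expo blk k r (uf j) i) * N i (a (uf j) *v w)"
        by (simp add: exp_minus field_simps)
      also have "\<dots> \<le> exp KK * max 1 \<epsilon>"
      proof (rule mult_mono)
        show "exp (- expo blk k r (uf j) i) \<le> exp KK" using expo_bound[OF ub, of i] by simp
        show "N i (a (uf j) *v w) \<le> max 1 \<epsilon>" using L_N_bound[OF zf(2)[of j, folded w_def] i] .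
      qed (auto simp: bn_nonneg[OF bn[OF i]])
      finally show ?thesis by (simp add: R_def)
    qed
    then have wl: "\<forall>l. c * \<bar>w$l\<bar> \<le> R" using c(2) by blast
    have zw: "zf j = h' *v w" by (simp add: w_def matrix_vector_mul_assoc h')
    have "\<bar>zf j $ l\<bar> \<le> B" for l
    proof -
      have "\<bar>zf j $ l\<bar> = \<bar>\<Sum>m\<in>UNIV. h'$l$m * w$m\<bar>" by (simp add: zw matrix_vector_mult_def)
      also have "\<dots> \<le> (\<Sum>m\<in>UNIV. \<bar>h'$l$m\<bar> * \<bar>w$m\<bar>)" by (rule order_trans[OF sum_abs]) (simp add: abs_mult)
      also have "\<dots> \<le> (\<Sum>m\<in>UNIV. \<bar>h'$l$m\<bar> * (R / c))"
      proof (intro sum_mono mult_left_mono)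
        fix m show "\<bar>w$m\<bar> \<le> R / c" using wl c(1) by (simp add: field_simps mult.commute)
      qed simp
      also have "\<dots> = (\<Sum>m\<in>UNIV. \<bar>h'$l$m\<bar>) * (R / c)" by (rule sum_distrib_right[symmetric])
      also have "\<dots> \<le> B" unfolding B_def
      proof (rule mult_right_mono)
        show "(\<Sum>m\<in>UNIV. \<bar>h'$l$m\<bar>) \<le> (\<Sum>l\<in>UNIV. \<Sum>m\<in>UNIV. \<bar>h'$l$m\<bar>)"
          by (rule member_le_sum[where f="\<lambda>l. \<Sum>m\<in>UNIV. \<bar>h'$l$m\<bar>"]) (auto intro: sum_nonneg)
        show "0 \<le> R / c" using c(1) by (simp add: R_def)
      qed
      finally show ?thesis .
    qed
    then show ?thesis using zf(1) by blast
  qed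
  have "finite (zf ` UNIV)" by (rule finite_subset[OF _ finite_Zbox[of B]]) (use zbound in blast)
  from pigeonhole_infinite[OF infinite_UNIV_nat this]
  obtain j0 where j0: "infinite {j. zf j = zf j0}" by auto
  obtain i0 where i0: "i0 < DD" "uf j0 i0 \<noteq> 0" using uf[of j0] by blast
  define \<delta> where "\<delta> = \<bar>uf j0 i0\<bar>"
  have dpos: "\<delta> > 0" using i0 by (simp add: \<delta>_def)
  obtain j1 where j1: "j1 \<ge> nat \<lceil>1 / \<delta>\<rceil>" "zf j1 = zf j0"
    using j0 unfolding infinite_nat_iff_unbounded_le by blast
  have "1 / \<delta> \<le> real j1" using j1(1) by linarith
  then have "1 / real (Suc j1) < \<delta>" using dpos by (simp add: field_simps)
  moreover have "\<bar>uf j1 i0\<bar> \<le> 1 / real (Suc j1)" using uf[of j1] i0 by blast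
  moreover have "uf j1 i0 = uf j0 i0"
  proof -
    define w where "w = h *v zf j0"
    have "\<forall>i<DD. N i (a (uf j0) *v w) = 1" using zf(2)[of j0] by (simp add: w_def L_eps_def)
    from Tv_char[OF this] have A: "Tv w i0 = - uf j0 i0" using i0 by auto
    have "\<forall>i<DD. N i (a (uf j1) *v w) = 1" using zf(2)[of j1] j1(2) by (simp add: w_def L_eps_def)
    from Tv_char[OF this] have "Tv w i0 = - uf j1 i0" using i0 by auto
    with A show ?thesis by simp
  qed
  ultimately show False by (simp add: \<delta>_def)
qed

definition Wj :: "nat \<Rightarrow> (real^'n) set set" where "Wj j = Ws (1 / real (Suc j))"

lemma Wj_inc: "incseq Wj"
proof (rule incseq_SucI)
  fix j
  have "Zs (1 / real (Suc (Suc j))) \<subseteq> Zs (1 / real (Suc j))" by (rule Zs_mono) (simp add: frac_le)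
  then show "Wj j \<subseteq> Wj (Suc j)" by (auto simp: Wj_def Ws_def)
qed

lemma Wj_UN: "(\<Union>j. Wj j) = S"
proof
  show "(\<Union>j. Wj j) \<subseteq> S" by (auto simp: Wj_def Ws_def)
  show "S \<subseteq> (\<Union>j. Wj j)"
  proof
    fix X assume X: "X \<in> S"
    then obtain j where "X \<notin> Zs (1 / real (Suc j))" using exhaust by blast
    then have "X \<in> Wj j" using X by (simp add: Wj_def Ws_def)
    then show "X \<in> (\<Union>j. Wj j)" by blast
  qed
qed

lemma Wj_sub: "Wj j \<subseteq> S" by (auto simp: Wj_def Ws_def)

lemma Wj_sets: "Wj j \<in> sets m" by (simp add: Wj_def Ws_sets)

lemma orb_disjoint:
  assumes C: "C \<subseteq> Ws \<sigma>" "C' \<subseteq> Ws \<sigma>" "C \<inter> C' = {}" and tau: "\<tau> \<le> \<sigma>"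
  shows "orb (Icube k r \<tau>) C \<inter> orb (Icube k r \<tau>) C' = {}"
proof (rule ccontr)
  assume "orb (Icube k r \<tau>) C \<inter> orb (Icube k r \<tau>) C' \<noteq> {}"
  then obtain X where "X \<in> orb (Icube k r \<tau>) C" "X \<in> orb (Icube k r \<tau>) C'" by blast
  then obtain t Y t' Y' where tY: "t \<in> Icube k r \<tau>" "Y \<in> C" "X = lat_act (a t) Y"
    and tY': "t' \<in> Icube k r \<tau>" "Y' \<in> C'" "X = lat_act (a t') Y'" by (metis orbE)
  define u where "u = (\<lambda>i. - t' i + t i)"
  have "Y' = lat_act (a (\<lambda>i. - t' i)) X" using tY'(3) by (simp add: lat_act_a_inv1)
  also have "\<dots> = lat_act (a u) Y" using tY(3) by (simp add: lat_act_comp a_mat_mult u_def)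
  finally have YY: "lat_act (a u) Y = Y'" by simp
  have YS: "Y \<in> S" "Y' \<in> S" "Y \<notin> Zs \<sigma>" using tY(2) tY'(2) C by (auto simp: Ws_def)
  show False
  proof (cases "\<exists>i<DD. u i \<noteq> 0")
    case True
    have "\<forall>i<DD. \<bar>u i\<bar> \<le> \<sigma>"
    proof (intro allI impI)
      fix i assume "i < DD"
      then have "0 \<le> t i" "t i \<le> \<tau>" "0 \<le> t' i" "t' i \<le> \<tau>" using tY(1) tY'(1) by (auto simp: Icube_def)
      then show "\<bar>u i\<bar> \<le> \<sigma>" using tau unfolding u_def by linarith
    qed
    then have "Y \<in> Zs \<sigma>" using True YS YY unfolding Zs_def by blast
    then show False using YS by simp
  next
    case False
    then have "a u = a (\<lambda>_. 0)" by (intro a_cong) auto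
    then have "Y' = Y" using YY by (simp add: a_mat_zero lat_act_id)
    then show False using tY(2) tY'(2) C(3) by blast
  qed
qed

end
context P56 begin

lemma gg_mono_set: assumes "C \<subseteq> C'" "C' \<in> sets m" "C' \<subseteq> S" shows "gg n C \<le> gg n C'"
  unfolding gg_def ff_def
  by (intro mult_left_mono emeasure_mono orb_mono_C orb_Icube_sets assms) auto

lemma mu_mono: assumes "C \<subseteq> C'" "C \<in> sets m" "C' \<in> sets m" "C' \<subseteq> S"
  shows "mu_S m blk k r C \<le> mu_S m blk k r C'"
proof -
  have "C \<subseteq> S" using assms by auto
  then show ?thesis unfolding mu_eq[OF assms(2) \<open>C \<subseteq> S\<close>] mu_eq[OF assms(3,4)]
    by (intro SUP_mono) (use gg_mono_set[OF assms(1,3,4)] in blast)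
qed
 
lemma gg_cont: assumes "C \<in> sets m" "C \<subseteq> S" shows "gg n C = (SUP j. gg n (C \<inter> Wj j))"
proof -
  have "(SUP j. emeasure m (orb (Icube k r (sq n)) (C \<inter> Wj j))) = emeasure m (\<Union>j. orb (Icube k r (sq n)) (C \<inter> Wj j))"
  proof (rule SUP_emeasure_incseq)
    show "range (\<lambda>j. orb (Icube k r (sq n)) (C \<inter> Wj j)) \<subseteq> sets m"
      using assms Wj_sets by (auto intro!: orb_Icube_sets)
    show "incseq (\<lambda>j. orb (Icube k r (sq n)) (C \<inter> Wj j))"
      using Wj_inc unfolding incseq_def by (metis inf_mono order_refl orb_mono_C)
  qed
  also have "(\<Union>j. orb (Icube k r (sq n)) (C \<inter> Wj j)) = orb (Icube k r (sq n)) C"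
    unfolding orb_UN_C[symmetric] using Wj_UN assms(2) by (simp add: Int_UN_distrib[symmetric] Int_absorb2)
  finally show ?thesis
    unfolding gg_def ff_def by (simp add: SUP_mult_left_ennreal[symmetric])
qed

lemma mu_cont: assumes "C \<in> sets m" "C \<subseteq> S" shows "mu_S m blk k r C = (SUP j. mu_S m blk k r (C \<inter> Wj j))"
proof -
  have CW: "C \<inter> Wj j \<in> sets m" "C \<inter> Wj j \<subseteq> S" for j using assms Wj_sets by auto
  have "mu_S m blk k r C = (SUP n. SUP j. gg n (C \<inter> Wj j))" using mu_eq[OF assms] gg_cont[OF assms] by simp
  also have "\<dots> = (SUP j. SUP n. gg n (C \<inter> Wj j))" by (rule SUP_commute)
  also have "\<dots> = (SUP j. mu_S m blk k r (C \<inter> Wj j))" using mu_eq[OF CW] by simp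
  finally show ?thesis .
qed

lemma sq_le: "sq (n + j) \<le> 1 / real (Suc j)"
proof -
  have "Suc (n + j) \<le> (fact (Suc (n + j)) :: nat)" by (rule fact_ge_self)
  then have "real (Suc (n + j)) \<le> real (fact (Suc (n + j)) :: nat)" by (simp only: of_nat_le_iff)
  then have "real (Suc j) \<le> fact (Suc (n + j))" by (simp only: of_nat_fact)
  then show ?thesis by (simp add: sq_def frac_le del: fact_Suc)
qed

lemma gg_UN: assumes G: "\<And>i. G i \<in> sets m" "\<And>i. G i \<subseteq> Wj j" "disjoint_family G"
  and n: "sq n \<le> 1 / real (Suc j)"
  shows "(\<Sum>i. gg n (G i)) = gg n (\<Union>i. G i)"
proof -
  have GS: "G i \<subseteq> S" for i using G(2) Wj_sub by blast
  have "(\<Sum>i. emeasure m (orb (Icube k r (sq n)) (G i))) = emeasure m (\<Union>i. orb (Icube k r (sq n)) (G i))"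
  proof (rule suminf_emeasure)
    show "range (\<lambda>i. orb (Icube k r (sq n)) (G i)) \<subseteq> sets m" using G(1) GS by (auto intro!: orb_Icube_sets)
    show "disjoint_family (\<lambda>i. orb (Icube k r (sq n)) (G i))"
      unfolding disjoint_family_on_def
    proof (intro ballI impI)
      fix i i' :: nat assume "i \<noteq> i'"
      then have "G i \<inter> G i' = {}" using G(3) by (simp add: disjoint_family_on_def)
      then show "orb (Icube k r (sq n)) (G i) \<inter> orb (Icube k r (sq n)) (G i') = {}"
        using G(2) n by (intro orb_disjoint) (auto simp: Wj_def)
    qed
  qed
  then show ?thesis unfolding gg_def ff_def orb_UN_C by simp
qed

lemma countably_additive_mu: "countably_additive {E \<in> sets m. E \<subseteq> S} (mu_S m blk k r)"
  unfolding countably_additive_def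
proof (intro allI impI)
  fix F :: "nat \<Rightarrow> (real^'n) set set"
  assume F: "range F \<subseteq> {E \<in> sets m. E \<subseteq> S}" and dF: "disjoint_family F"
    and U: "\<Union> (range F) \<in> {E \<in> sets m. E \<subseteq> S}"
  have Fi: "F i \<in> sets m" "F i \<subseteq> S" for i using F by auto
  have Um: "(\<Union>i. F i) \<in> sets m" "(\<Union>i. F i) \<subseteq> S" using U by auto
  let ?mu = "mu_S m blk k r"
  show "(\<Sum>i. ?mu (F i)) = ?mu (\<Union> (range F))"
  proof (rule antisym)
    show "?mu (\<Union> (range F)) \<le> (\<Sum>i. ?mu (F i))"
      unfolding mu_eq[OF Um]
    proof (rule SUP_least)
      fix n
      have "gg n (\<Union>i. F i) = ennreal (1 / sq n ^ DD) * emeasure m (\<Union>i. orb (Icube k r (sq n)) (F i))"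
        by (simp add: gg_def ff_def orb_UN_C)
      also have "\<dots> \<le> ennreal (1 / sq n ^ DD) * (\<Sum>i. emeasure m (orb (Icube k r (sq n)) (F i)))"
        by (intro mult_left_mono emeasure_subadditive_countably) (auto intro!: orb_Icube_sets Fi)
      also have "\<dots> = (\<Sum>i. gg n (F i))" by (simp add: gg_def ff_def)
      also have "\<dots> \<le> (\<Sum>i. ?mu (F i))"
        by (intro suminf_le) (auto simp: mu_eq[OF Fi] intro: SUP_upper)
      finally show "gg n (\<Union>i. F i) \<le> (\<Sum>i. ?mu (F i))" .
    qed
  next
    have FW: "F i \<inter> Wj j \<in> sets m" "F i \<inter> Wj j \<subseteq> S" for i j using Fi Wj_sets by auto
    have "(\<Sum>i. ?mu (F i)) = (\<Sum>i. SUP j. ?mu (F i \<inter> Wj j))" using mu_cont[OF Fi] by simp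
    also have "\<dots> = (SUP j. \<Sum>i. ?mu (F i \<inter> Wj j))"
    proof (rule ennreal_suminf_SUP_eq)
      fix i show "incseq (\<lambda>j. ?mu (F i \<inter> Wj j))"
        using Wj_inc FW unfolding incseq_def by (metis inf_mono order_refl mu_mono)
    qed
    also have "\<dots> \<le> ?mu (\<Union> (range F))"
    proof (rule SUP_least)
      fix j
      have "(\<Sum>i. ?mu (F i \<inter> Wj j)) = (\<Sum>i. SUP n. gg n (F i \<inter> Wj j))" using mu_eq[OF FW] by simp
      also have "\<dots> = (SUP n. \<Sum>i. gg n (F i \<inter> Wj j))"
        by (rule ennreal_suminf_SUP_eq) (rule incseq_gg[OF FW])
      also have "\<dots> \<le> ?mu (\<Union> (range F))"
      proof (rule SUP_least)
        fix n
        have "(\<Sum>i. gg n (F i \<inter> Wj j)) \<le> (\<Sum>i. gg (n + j) (F i \<inter> Wj j))"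
          by (intro suminf_le) (auto intro: incseqD[OF incseq_gg[OF FW]])
        also have "\<dots> = gg (n + j) (\<Union>i. F i \<inter> Wj j)"
        proof (rule gg_UN)
          show "disjoint_family (\<lambda>i. F i \<inter> Wj j)" using dF by (auto simp: disjoint_family_on_def)
        qed (use FW sq_le in auto)
        also have "\<dots> \<le> gg (n + j) (\<Union>i. F i)" by (rule gg_mono_set[OF _ Um]) auto
        also have "\<dots> \<le> ?mu (\<Union>i. F i)" unfolding mu_eq[OF Um] by (rule SUP_upper) simp
        finally show "(\<Sum>i. gg n (F i \<inter> Wj j)) \<le> ?mu (\<Union> (range F))" by simp
      qed
      finally show "(\<Sum>i. ?mu (F i \<inter> Wj j)) \<le> ?mu (\<Union> (range F))" .
    qed
    finally show "(\<Sum>i. ?mu (F i)) \<le> ?mu (\<Union> (range F))" .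
  qed
qed

lemma main: "measure_space S {E \<in> sets m. E \<subseteq> S} (mu_S m blk k r)"
  unfolding measure_space_def
proof (intro conjI sigma_S countably_additive_mu)
  have "orbit_set blk k r I {} = {}" for I by (simp add: orbit_set_def)
  then show "positive {E \<in> sets m. E \<subseteq> S} (mu_S m blk k r)"
    by (simp add: positive_def mu_S_def)
qed

end

theorem proposition5p6:
  fixes blk :: "'n::finite \<Rightarrow> nat" and k r :: nat
    and N :: "nat \<Rightarrow> real^'n \<Rightarrow> real" and \<epsilon> :: real
    and m :: "(real^'n) set measure"
  assumes "k \<ge> 1" "r \<ge> 1"
    and "\<forall>j. blk j < k + r"
    and "\<forall>i<k+r. block blk i \<noteq> {}"
    and "\<forall>i<k+r. is_block_norm blk i (N i)"
    and "\<epsilon> > 0"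
    and "space m = Xd" "sets m = Xd_sets" "emeasure m (space m) = 1"
    and "\<forall>g\<in>SLd. \<forall>E\<in>sets m. emeasure m (lat_act g ` E) = emeasure m E"
  shows "measure_space (S_eps blk k r N \<epsilon>)
           {E \<in> sets m. E \<subseteq> S_eps blk k r N \<epsilon>} (mu_S m blk k r)"
proof -
  interpret P56 blk k r N \<epsilon> m
    using assms by (unfold_locales) auto
  show ?thesis by (rule main)
qed

end
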